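(* Let $a>0$, $T>0$ and $\phi\in\mathcal D[0,T]$. If $(r,g)\in\Pi(\phi)$, then $(r,\Lambda_a(g))\in\Pi(\Lambda_a(\phi))$.
   Context: $\mathcal D[0,T]$ is the space of right-continuous functions $[0,T]\to\mathbb R$ with left limits. $x^+=\max(x,0)$, $\wedge=\min$, $\vee=\max$. For $a>0$ and a real function $f$ on an interval $[0,S]$, $\Lambda_a(f)(t)=f(t)-\sup_{s\in[0,t]}\big[(f(s)-a)^+\wedge\inf_{u\in[s,t]}f(u)\big]$, $t\in[0,S]$. For $\phi\in\mathcal D[0,T]$, set $\phi(0-)=\phi(0)$ and let $G_\phi=\{(t,z)\in[0,T]\times\mathbb R:z\in[\phi(t-)\wedge\phi(t),\phi(t-)\vee\phi(t)]\}$, ordered by $(t_1,z_1)\le(t_2,z_2)$ iff either $t_1<t_2$, or $t_1=t_2$ and $|\phi(t_1-)-z_1|\le|\phi(t_1-)-z_2|$. $\Pi(\phi)$ is the set of continuous maps $(r,g):[0,1]\to G_\phi$ that are onto $G_\phi$ and nondecreasing with respect to this order. *)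

theory Defs
  imports "HOL-Analysis.Analysis"
begin

text \<open>Functions on [0,T] are represented as total functions real => real;
only their values on [0,T] matter.\<close>

definition cadlag :: "real \<Rightarrow> (real \<Rightarrow> real) \<Rightarrow> bool" where
  "cadlag T \<phi> \<longleftrightarrow>
     (\<forall>t\<in>{0..<T}. (\<phi> \<longlongrightarrow> \<phi> t) (at_right t)) \<and>
     (\<forall>t\<in>{0<..T}. \<exists>l. (\<phi> \<longlongrightarrow> l) (at_left t))"

text \<open>Left limit phi(t-), with the convention phi(0-) = phi(0).\<close>
definition leftlim :: "(real \<Rightarrow> real) \<Rightarrow> real \<Rightarrow> real" where
  "leftlim \<phi> t = (if t \<le> 0 then \<phi> 0 else Lim (at_left t) \<phi>)"

definition Lambda :: "real \<Rightarrow> (real \<Rightarrow> real) \<Rightarrow> real \<Rightarrow> real" where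
  "Lambda a f t = f t - (SUP s\<in>{0..t}. min (max (f s - a) 0) (INF u\<in>{s..t}. f u))"

definition cgraph :: "real \<Rightarrow> (real \<Rightarrow> real) \<Rightarrow> (real \<times> real) set" where
  "cgraph T \<phi> = {(t, z). t \<in> {0..T} \<and>
       min (leftlim \<phi> t) (\<phi> t) \<le> z \<and> z \<le> max (leftlim \<phi> t) (\<phi> t)}"

definition graph_le :: "(real \<Rightarrow> real) \<Rightarrow> real \<times> real \<Rightarrow> real \<times> real \<Rightarrow> bool" where
  "graph_le \<phi> p q \<longleftrightarrow> fst p < fst q \<or>
     (fst p = fst q \<and> \<bar>leftlim \<phi> (fst p) - snd p\<bar> \<le> \<bar>leftlim \<phi> (fst p) - snd q\<bar>)"

definition param_reps :: "real \<Rightarrow> (real \<Rightarrow> real) \<Rightarrow> ((real \<Rightarrow> real) \<times> (real \<Rightarrow> real)) set" where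
  "param_reps T \<phi> = {(r, g).
      continuous_on {0..1} r \<and> continuous_on {0..1} g \<and>
      (\<lambda>s. (r s, g s)) ` {0..1} = cgraph T \<phi> \<and>
      (\<forall>s1\<in>{0..1}. \<forall>s2\<in>{0..1}. s1 \<le> s2 \<longrightarrow> graph_le \<phi> (r s1, g s1) (r s2, g s2))}"

end

theory Submission
  imports Defs
begin


definition trm :: "real \<Rightarrow> (real \<Rightarrow> real) \<Rightarrow> real \<Rightarrow> real \<Rightarrow> real" where
  "trm a f t s = min (max (f s - a) 0) (INF u\<in>{s..t}. f u)"
definition Kf :: "real \<Rightarrow> (real \<Rightarrow> real) \<Rightarrow> real \<Rightarrow> real" where
  "Kf a f t = (SUP s\<in>{0..t}. trm a f t s)"

lemma Lambda_Kf: "Lambda a f t = f t - Kf a f t"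
  by (simp add: Lambda_def Kf_def trm_def)

context
  fixes f :: "real \<Rightarrow> real" and S B :: real
  assumes bnd: "\<And>x. x \<in> {0..S} \<Longrightarrow> \<bar>f x\<bar> \<le> B"
begin

lemma bddb: "0 \<le> u \<Longrightarrow> s \<le> S \<Longrightarrow> bdd_below (f ` {u..s})"
proof (rule bdd_belowI[where m="-B"])
  fix y assume "0 \<le> u" "s \<le> S" "y \<in> f ` {u..s}"
  then obtain x where x: "x \<in> {u..s}" "y = f x" by auto
  have "x \<in> {0..S}" using x \<open>0 \<le> u\<close> \<open>s \<le> S\<close> by auto
  thus "- B \<le> y" using bnd[of x] x by auto
qed

lemma inf_le: "0 \<le> u \<Longrightarrow> s \<le> S \<Longrightarrow> x \<in> {u..s} \<Longrightarrow> (INF y\<in>{u..s}. f y) \<le> f x"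
  by (rule cINF_lower[OF bddb])

lemma inf_ge: "u \<le> s \<Longrightarrow> (\<And>x. x \<in> {u..s} \<Longrightarrow> c \<le> f x) \<Longrightarrow> c \<le> (INF y\<in>{u..s}. f y)"
  by (rule cINF_greatest) auto

lemma trm_le: "0 \<le> u \<Longrightarrow> u \<le> s \<Longrightarrow> s \<le> S \<Longrightarrow> trm a f s u \<le> B"
proof -
  assume h: "0 \<le> u" "u \<le> s" "s \<le> S"
  have "trm a f s u \<le> (INF y\<in>{u..s}. f y)" by (simp add: trm_def)
  also have "\<dots> \<le> f s" using inf_le h by auto
  also have "\<dots> \<le> B" using bnd[of s] h by auto
  finally show ?thesis .
qed

lemma bdda: "0 \<le> s \<Longrightarrow> s \<le> S \<Longrightarrow> bdd_above (trm a f s ` {0..s})"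
  by (rule bdd_aboveI[where M=B]) (use trm_le in force)

lemma K_ge: "0 \<le> u \<Longrightarrow> u \<le> s \<Longrightarrow> s \<le> S \<Longrightarrow> trm a f s u \<le> Kf a f s"
  unfolding Kf_def by (rule cSUP_upper[OF _ bdda]) auto

lemma K_le: "0 \<le> s \<Longrightarrow> (\<And>u. u \<in> {0..s} \<Longrightarrow> trm a f s u \<le> c) \<Longrightarrow> Kf a f s \<le> c"
  unfolding Kf_def by (rule cSUP_least) auto

lemma trm_self: "trm a f s s = min (max (f s - a) 0) (f s)"
  by (simp add: trm_def)

lemma K_up:
  assumes "0 \<le> s1" "s1 \<le> s2" "s2 \<le> S" "\<And>u. u \<in> {s1..s2} \<Longrightarrow> f u \<le> f s1 + d"
  shows "Kf a f s2 \<le> Kf a f s1 + d"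
proof (rule K_le)
  show "0 \<le> s2" using assms by auto
  fix u assume u: "u \<in> {0..s2}"
  have "f s1 \<le> f s1 + d" by (rule assms(4)) (use assms in auto)
  hence d: "d \<ge> 0" by simp
  show "trm a f s2 u \<le> Kf a f s1 + d"
  proof (cases "u \<le> s1")
    case True
    have "(INF y\<in>{u..s2}. f y) \<le> (INF y\<in>{u..s1}. f y)"
      by (rule inf_ge) (use True assms u in \<open>auto intro: inf_le\<close>)
    hence "trm a f s2 u \<le> trm a f s1 u" by (auto simp: trm_def)
    also have "\<dots> \<le> Kf a f s1" using K_ge True u assms by auto
    finally show ?thesis using d by simp
  next
    case False
    have "trm a f s2 u \<le> min (max (f u - a) 0) (f u)"
      using inf_le[of u s2 u] u assms by (auto simp: trm_def)
    also have "\<dots> \<le> trm a f s1 s1 + d" unfolding trm_self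
    proof -
      have "f u \<le> f s1 + d" by (rule assms(4)) (use u False in auto)
      thus "min (max (f u - a) 0) (f u) \<le> min (max (f s1 - a) 0) (f s1) + d"
        using d by (auto simp: min_def max_def)
    qed
    also have "\<dots> \<le> Kf a f s1 + d" using K_ge[of s1 s1] assms by auto
    finally show ?thesis .
  qed
qed

lemma K_down:
  assumes "0 \<le> s1" "s1 \<le> s2" "s2 \<le> S" "\<And>u. u \<in> {s1..s2} \<Longrightarrow> f s1 - d \<le> f u"
  shows "Kf a f s1 - d \<le> Kf a f s2"
proof -
  have "f s1 - d \<le> f s1" by (rule assms(4)) (use assms in auto)
  hence d0: "d \<ge> 0" by simp
  have "Kf a f s1 \<le> Kf a f s2 + d"
  proof (rule K_le)
    show "0 \<le> s1" by fact
    fix u assume u: "u \<in> {0..s1}"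
    have i1: "(INF y\<in>{u..s1}. f y) \<le> f s1" using inf_le u assms by auto
    have "(INF y\<in>{u..s1}. f y) - d \<le> (INF y\<in>{u..s2}. f y)"
    proof (rule inf_ge)
      show "u \<le> s2" using u assms by auto
      fix x assume x: "x \<in> {u..s2}"
      show "(INF y\<in>{u..s1}. f y) - d \<le> f x"
      proof (cases "x \<le> s1")
        case True
        have "(INF y\<in>{u..s1}. f y) \<le> f x" using inf_le[of u s1 x] True u x assms by auto
        moreover have "f s1 - d \<le> f s1" by (rule assms(4)) (use assms in auto)
        ultimately show ?thesis by simp
      next
        case False
        have "f s1 - d \<le> f x" by (rule assms(4)) (use x False in auto)
        thus ?thesis using i1 by auto
      qed
    qed
    hence "trm a f s1 u \<le> trm a f s2 u + d" using d0 by (auto simp: trm_def min_def)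
    also have "\<dots> \<le> Kf a f s2 + d" using K_ge[of u s2] u assms by auto
    finally show "trm a f s1 u \<le> Kf a f s2 + d" .
  qed
  thus ?thesis by simp
qed

end

lemma Lambda_cont:
  fixes g :: "real \<Rightarrow> real"
  assumes gc: "continuous_on {0..1} g"
  shows "continuous_on {0..1} (Lambda a g)"
proof -
  obtain B where B: "\<And>x. x \<in> {0..1} \<Longrightarrow> \<bar>g x\<bar> \<le> B"
    using compact_imp_bounded[OF compact_continuous_image[OF gc compact_Icc]]
    unfolding bounded_iff by (metis image_eqI real_norm_def)
  have uc: "uniformly_continuous_on {0..1} g"
    by (rule compact_uniformly_continuous[OF gc compact_Icc])
  have key: "\<bar>Kf a g y - Kf a g x\<bar> \<le> e"
    if xy: "x \<in> {0..1}" "y \<in> {0..1}" "x \<le> y" and dd: "\<And>u. u \<in> {x..y} \<Longrightarrow> \<bar>g u - g x\<bar> \<le> e"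
    for x y e
  proof -
    have "Kf a g y \<le> Kf a g x + e"
    proof (rule K_up[OF B])
      fix u assume "u \<in> {x..y}" from dd[OF this] show "g u \<le> g x + e" by simp
    qed (use xy in auto)
    moreover have "Kf a g x - e \<le> Kf a g y"
    proof (rule K_down[OF B])
      fix u assume "u \<in> {x..y}" from dd[OF this] show "g x - e \<le> g u" by simp
    qed (use xy in auto)
    ultimately show ?thesis by auto
  qed
  show ?thesis unfolding continuous_on_iff
  proof (intro ballI allI impI)
    fix x e :: real assume x: "x \<in> {0..1}" and e: "0 < e"
    obtain d where d: "d > 0" and dh: "\<And>u v. u \<in> {0..1} \<Longrightarrow> v \<in> {0..1} \<Longrightarrow> dist u v < d \<Longrightarrow> dist (g u) (g v) < e/3"
      using uc e unfolding uniformly_continuous_on_def by (metis divide_pos_pos zero_less_numeral)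
    show "\<exists>d>0. \<forall>x'\<in>{0..1}. dist x' x < d \<longrightarrow> dist (Lambda a g x') (Lambda a g x) < e"
    proof (intro exI[of _ d] conjI ballI impI d)
      fix y assume y: "y \<in> {0..1}" and dy: "dist y x < d"
      have gxy: "\<bar>g y - g x\<bar> < e/3" using dh[OF y x dy] by (simp add: dist_real_def)
      have kk: "\<bar>Kf a g y - Kf a g x\<bar> \<le> e/3"
      proof (cases "x \<le> y")
        case True
        show ?thesis
        proof (rule key[OF x y True])
          fix u assume u: "u \<in> {x..y}"
          hence "u \<in> {0..1}" "dist u x < d" using x y dy by (auto simp: dist_real_def)
          thus "\<bar>g u - g x\<bar> \<le> e/3" using dh[of u x] x by (simp add: dist_real_def)
        qed
      next
        case False
        have "\<bar>Kf a g x - Kf a g y\<bar> \<le> e/3"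
        proof (rule key[OF y x])
          show "y \<le> x" using False by simp
          fix u assume u: "u \<in> {y..x}"
          hence "u \<in> {0..1}" "dist u y < d" using x y dy by (auto simp: dist_real_def)
          thus "\<bar>g u - g y\<bar> \<le> e/3" using dh[of u y] y by (simp add: dist_real_def)
        qed
        thus ?thesis by (simp add: abs_minus_commute)
      qed
      show "dist (Lambda a g y) (Lambda a g x) < e"
        using gxy kk e unfolding Lambda_Kf dist_real_def abs_le_iff abs_less_iff by linarith
    qed
  qed
qed



locale setting =
  fixes a T :: real and \<phi> r g :: "real \<Rightarrow> real"
  assumes T: "T > 0" and cad: "cadlag T \<phi>"
    and rc: "continuous_on {0..1} r" and gc: "continuous_on {0..1} g"
    and img: "(\<lambda>s. (r s, g s)) ` {0..1} = cgraph T \<phi>"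
    and mon: "\<forall>s1\<in>{0..1}. \<forall>s2\<in>{0..1}. s1 \<le> s2 \<longrightarrow> graph_le \<phi> (r s1, g s1) (r s2, g s2)"
begin

lemma mem: "s \<in> {0..1} \<Longrightarrow> (r s, g s) \<in> cgraph T \<phi>"
  using img by blast

lemma r_range: "s \<in> {0..1} \<Longrightarrow> r s \<in> {0..T}"
  using mem[of s] by (simp add: cgraph_def)

lemma seg: "s \<in> {0..1} \<Longrightarrow> min (leftlim \<phi> (r s)) (\<phi> (r s)) \<le> g s \<and> g s \<le> max (leftlim \<phi> (r s)) (\<phi> (r s))"
  using mem[of s] by (simp add: cgraph_def)

lemma surj: "(t, z) \<in> cgraph T \<phi> \<Longrightarrow> \<exists>s\<in>{0..1}. r s = t \<and> g s = z"
proof -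
  assume "(t, z) \<in> cgraph T \<phi>"
  hence "(t, z) \<in> (\<lambda>s. (r s, g s)) ` {0..1}" using img by simp
  thus ?thesis by force
qed

lemma rmono: "s1 \<in> {0..1} \<Longrightarrow> s2 \<in> {0..1} \<Longrightarrow> s1 \<le> s2 \<Longrightarrow> r s1 \<le> r s2"
  using mon by (force simp: graph_le_def)

lemma rmono_abs: "s1 \<in> {0..1} \<Longrightarrow> s2 \<in> {0..1} \<Longrightarrow> s1 \<le> s2 \<Longrightarrow> r s1 = r s2 \<Longrightarrow>
   \<bar>leftlim \<phi> (r s1) - g s1\<bar> \<le> \<bar>leftlim \<phi> (r s1) - g s2\<bar>"
  using mon by (force simp: graph_le_def)

lemma pt: "t \<in> {0..T} \<Longrightarrow> \<exists>s\<in>{0..1}. r s = t \<and> g s = \<phi> t"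
  by (rule surj) (auto simp: cgraph_def)

lemma seg_aux: "min L P \<le> z \<Longrightarrow> z \<le> max L P \<Longrightarrow> \<bar>L - P\<bar> \<le> \<bar>L - z\<bar> \<Longrightarrow> z = (P::real)"
  by (cases "L \<le> P"; cases "L \<le> z") (simp_all add: min_def max_def)

lemma seg_aux2: "min L P \<le> z1 \<Longrightarrow> z1 \<le> max L P \<Longrightarrow> min L P \<le> z2 \<Longrightarrow> z2 \<le> max L P \<Longrightarrow>
   \<bar>L - z1\<bar> \<le> \<bar>L - z2\<bar> \<Longrightarrow> (L \<le> P \<longrightarrow> z1 \<le> z2) \<and> (\<not> L \<le> P \<longrightarrow> z2 \<le> (z1::real))"
  by (cases "L \<le> P"; cases "L \<le> z1"; cases "L \<le> z2") (simp_all add: min_def max_def)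

lemma fwd: "s1 \<in> {0..1} \<Longrightarrow> s2 \<in> {0..1} \<Longrightarrow> s1 \<le> s2 \<Longrightarrow> r s1 = r s2 \<Longrightarrow> g s1 = \<phi> (r s1)
   \<Longrightarrow> g s2 = \<phi> (r s2)"
proof -
  assume h: "s1 \<in> {0..1}" "s2 \<in> {0..1}" "s1 \<le> s2" "r s1 = r s2" "g s1 = \<phi> (r s1)"
  show ?thesis
    using seg_aux[of "leftlim \<phi> (r s2)" "\<phi> (r s2)" "g s2"] seg[OF h(2)] rmono_abs[OF h(1-4)] h(4,5)
    by simp
qed

lemma gdir: "s1 \<in> {0..1} \<Longrightarrow> s2 \<in> {0..1} \<Longrightarrow> s1 \<le> s2 \<Longrightarrow> r s1 = r s2 \<Longrightarrow>
   (leftlim \<phi> (r s1) \<le> \<phi> (r s1) \<longrightarrow> g s1 \<le> g s2) \<and> (\<not> leftlim \<phi> (r s1) \<le> \<phi> (r s1) \<longrightarrow> g s2 \<le> g s1)"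
proof -
  assume h: "s1 \<in> {0..1}" "s2 \<in> {0..1}" "s1 \<le> s2" "r s1 = r s2"
  show ?thesis
    using seg_aux2[of "leftlim \<phi> (r s1)" "\<phi> (r s1)" "g s1" "g s2"] seg[OF h(1)] seg[OF h(2)] rmono_abs[OF h(1-4)] h(4)
    by simp
qed

lemma rlt: "s1 \<in> {0..1} \<Longrightarrow> s2 \<in> {0..1} \<Longrightarrow> r s1 < r s2 \<Longrightarrow> s1 < s2"
  using rmono[of s2 s1] by force

lemma bnd_ex: "\<exists>B. (\<forall>x\<in>{0..1}. \<bar>g x\<bar> \<le> B) \<and> (\<forall>t\<in>{0..T}. \<bar>\<phi> t\<bar> \<le> B)"
proof -
  obtain B where B: "\<And>x. x \<in> {0..1} \<Longrightarrow> \<bar>g x\<bar> \<le> B"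
    using compact_imp_bounded[OF compact_continuous_image[OF gc compact_Icc]]
    unfolding bounded_iff by (metis image_eqI real_norm_def)
  have "\<forall>t\<in>{0..T}. \<bar>\<phi> t\<bar> \<le> B"
  proof
    fix t assume "t \<in> {0..T}"
    then obtain s where "s \<in> {0..1}" "g s = \<phi> t" using pt by blast
    thus "\<bar>\<phi> t\<bar> \<le> B" using B by force
  qed
  thus ?thesis using B by blast
qed

lemma lim_left: "t \<in> {0<..T} \<Longrightarrow> (\<phi> \<longlongrightarrow> leftlim \<phi> t) (at_left t)"
proof -
  assume t: "t \<in> {0<..T}"
  then obtain l where l: "(\<phi> \<longlongrightarrow> l) (at_left t)" using cad unfolding cadlag_def by blast
  have "leftlim \<phi> t = l" using t tendsto_Lim[OF _ l] by (simp add: leftlim_def)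
  thus ?thesis using l by simp
qed

lemma ll_lower: "0 \<le> v \<Longrightarrow> v < t' \<Longrightarrow> t' \<le> t \<Longrightarrow> t \<le> T \<Longrightarrow> (\<And>x. x \<in> {v..t} \<Longrightarrow> c \<le> \<phi> x)
   \<Longrightarrow> c \<le> leftlim \<phi> t'"
proof -
  assume h: "0 \<le> v" "v < t'" "t' \<le> t" "t \<le> T" and c: "\<And>x. x \<in> {v..t} \<Longrightarrow> c \<le> \<phi> x"
  show ?thesis
  proof (rule tendsto_lowerbound[OF lim_left])
    show "t' \<in> {0<..T}" using h by auto
    show "\<forall>\<^sub>F x in at_left t'. c \<le> \<phi> x"
      using eventually_at_left_real[OF h(2)] by eventually_elim (use h c in auto)
  qed simp
qed

lemma core: "u \<in> {0..1} \<Longrightarrow> s \<in> {0..1} \<Longrightarrow> u \<le> w \<Longrightarrow> w \<le> s \<Longrightarrow> g u = \<phi> (r u) \<Longrightarrow>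
  (\<And>x. x \<in> {r u..r s} \<Longrightarrow> c \<le> \<phi> x) \<Longrightarrow> c \<le> g w"
proof -
  assume u: "u \<in> {0..1}" and s: "s \<in> {0..1}" and uw: "u \<le> w" "w \<le> s" and gu: "g u = \<phi> (r u)"
    and c: "\<And>x. x \<in> {r u..r s} \<Longrightarrow> c \<le> \<phi> x"
  have w: "w \<in> {0..1}" using u s uw by auto
  have r1: "r u \<le> r w" "r w \<le> r s" using rmono u s w uw by auto
  show ?thesis
  proof (cases "r w = r u")
    case True
    have "g w = \<phi> (r w)" using fwd[OF u w uw(1)] True gu by simp
    thus ?thesis using c[of "r w"] r1 by auto
  next
    case False
    have "c \<le> leftlim \<phi> (r w)"
      by (rule ll_lower[of "r u" _ "r s"]) (use r_range u s r1 False c in auto)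
    moreover have "c \<le> \<phi> (r w)" using c[of "r w"] r1 by auto
    ultimately show ?thesis using seg[OF w] by auto
  qed
qed

lemma arith1: "A - e \<le> A' \<Longrightarrow> min (L - e) c \<le> I \<Longrightarrow> 0 < (e::real) \<Longrightarrow>
  min A (min L c) - e \<le> min A' I"
  by (auto simp: min_def split: if_splits)

lemma M1:
  assumes s: "s \<in> {0..1}" and gs: "g s = \<phi> (r s)"
  shows "Kf a g s = Kf a \<phi> (r s)"
proof -
  obtain B where Bg: "\<And>x. x \<in> {0..1} \<Longrightarrow> \<bar>g x\<bar> \<le> B" and Bp: "\<And>x. x \<in> {0..T} \<Longrightarrow> \<bar>\<phi> x\<bar> \<le> B"
    using bnd_ex by blast
  define t where "t = r s"
  have t: "t \<in> {0..T}" using r_range s t_def by auto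
  have ge: "Kf a \<phi> t \<le> Kf a g s"
  proof (rule K_le[OF Bp])
    show "0 \<le> t" using t by auto
    fix v assume v: "v \<in> {0..t}"
    obtain u where u: "u \<in> {0..1}" "r u = v" "g u = \<phi> v" "u \<le> s"
    proof (cases "v = t")
      case True thus ?thesis using that[of s] s gs t_def by auto
    next
      case False
      then obtain u where u: "u\<in>{0..1}" "r u = v" "g u = \<phi> v" using pt[of v] v t by auto
      have "u < s" using rlt[OF u(1) s] u(2) v False t_def by auto
      thus ?thesis using that[of u] u by auto
    qed
    define c where "c = (INF x\<in>{v..t}. \<phi> x)"
    have cle: "\<And>x. x \<in> {v..t} \<Longrightarrow> c \<le> \<phi> x" unfolding c_def by (rule inf_le[OF Bp]) (use v t in auto)
    have "c \<le> (INF x\<in>{u..s}. g x)"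
    proof (rule inf_ge[OF Bg])
      show "u \<le> s" by fact
      fix w assume w: "w \<in> {u..s}"
      show "c \<le> g w" by (rule core[OF u(1) s]) (use w u cle t_def in auto)
    qed
    hence "trm a \<phi> t v \<le> trm a g s u" unfolding trm_def c_def using u by auto
    also have "\<dots> \<le> Kf a g s" by (rule K_ge[OF Bg]) (use u s in auto)
    finally show "trm a \<phi> t v \<le> Kf a g s" .
  qed
  have le: "Kf a g s \<le> Kf a \<phi> t"
  proof (rule K_le[OF Bg])
    show "0 \<le> s" using s by auto
    fix u assume u0: "u \<in> {0..s}"
    have u: "u \<in> {0..1}" using u0 s by auto
    define v where "v = r u"
    have v: "v \<in> {0..t}" using r_range[OF u] rmono[OF u s] u0 unfolding v_def t_def by auto
    define Ig where "Ig = (INF x\<in>{u..s}. g x)"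
    define c where "c = (INF x\<in>{v..t}. \<phi> x)"
    have cle: "\<And>x. x \<in> {v..t} \<Longrightarrow> c \<le> \<phi> x" unfolding c_def by (rule inf_le[OF Bp]) (use v t in auto)
    have Igc: "Ig \<le> c" unfolding c_def
    proof (rule inf_ge[OF Bp])
      show "v \<le> t" using v by auto
      fix w assume w: "w \<in> {v..t}"
      obtain x where x: "x \<in> {u..s}" "g x = \<phi> w"
      proof (cases "w = t")
        case True thus ?thesis using that[of s] s gs t_def u0 by auto
      next
        case False
        then obtain x where x: "x\<in>{0..1}" "r x = w" "g x = \<phi> w" using pt[of w] w v t by auto
        have xs: "x < s" using rlt[OF x(1) s] x(2) w False t_def by auto
        show ?thesis
        proof (cases "u \<le> x")
          case True thus ?thesis using that[of x] x xs by auto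
        next
          case False
          have "r x \<le> r u" using rmono[OF x(1) u] False by auto
          hence rux: "r u = r x" using x(2) w v_def by auto
          have "g u = \<phi> (r u)" using fwd[OF x(1) u] False rux x by auto
          thus ?thesis using that[of u] u0 rux x by auto
        qed
      qed
      have "Ig \<le> g x" unfolding Ig_def by (rule inf_le[OF Bg]) (use x u s in auto)
      thus "Ig \<le> \<phi> w" using x by simp
    qed
    have trg: "trm a g s u = min (max (g u - a) 0) Ig" unfolding trm_def Ig_def by simp
    show "trm a g s u \<le> Kf a \<phi> t"
    proof (cases "g u \<le> \<phi> v")
      case True
      have tp: "trm a \<phi> t v = min (max (\<phi> v - a) 0) c" by (simp add: trm_def c_def)
      have "trm a g s u \<le> trm a \<phi> t v" unfolding tp trg using Igc True
        by (auto simp: min_def max_def)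
      also have "\<dots> \<le> Kf a \<phi> t" by (rule K_ge[OF Bp]) (use v t in auto)
      finally show ?thesis .
    next
      case False
      define L where "L = leftlim \<phi> v"
      have gL: "g u \<le> L" using seg[OF u] False unfolding L_def v_def by (auto simp: max_def split: if_splits)
      have v0: "v > 0"
      proof (rule ccontr)
        assume "\<not> v > 0" hence "v = 0" using v by auto
        hence "L = \<phi> v" by (simp add: L_def leftlim_def)
        thus False using seg[OF u] False gL unfolding v_def L_def by (auto simp: max_def split: if_splits)
      qed
      have IgL: "Ig \<le> g u" unfolding Ig_def by (rule inf_le[OF Bg]) (use u0 s in auto)
      define X where "X = min (max (L - a) 0) (min L c)"
      have tX: "trm a g s u \<le> X" unfolding trg X_def using Igc IgL gL by (auto simp: min_def max_def)
      have "X \<le> Kf a \<phi> t"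
      proof (rule ccontr)
        assume nX: "\<not> X \<le> Kf a \<phi> t"
        define e where "e = (X - Kf a \<phi> t)/2"
        have e: "e > 0" using nX by (simp add: e_def)
        have "\<forall>\<^sub>F x in at_left v. dist (\<phi> x) L < e"
          using lim_left[of v] v0 v t e unfolding L_def tendsto_iff by auto
        then obtain b where b: "b < v" "\<And>y. b < y \<Longrightarrow> y < v \<Longrightarrow> \<bar>\<phi> y - L\<bar> < e"
          unfolding eventually_at_left_field dist_real_def by blast
        define v' where "v' = (max b 0 + v)/2"
        have v': "max b 0 < v'" "v' < v" using b v0 by (auto simp: v'_def)
        have I': "min (L - e) c \<le> (INF x\<in>{v'..t}. \<phi> x)"
        proof (rule inf_ge[OF Bp])
          show "v' \<le> t" using v' v by auto
          fix x assume x: "x \<in> {v'..t}"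
          show "min (L - e) c \<le> \<phi> x"
          proof (cases "x < v")
            case True thus ?thesis using b(2)[of x] x v' by auto
          next
            case False thus ?thesis using cle[of x] x by auto
          qed
        qed
        have pv: "\<bar>\<phi> v' - L\<bar> < e" using b(2) v' by auto
        have m1: "max (L - a) 0 - e \<le> max (\<phi> v' - a) 0" using pv e by (auto simp: max_def)
        have "X - e \<le> trm a \<phi> t v'" unfolding trm_def X_def
          by (rule arith1[OF m1 I' e])
        moreover have "trm a \<phi> t v' \<le> Kf a \<phi> t" by (rule K_ge[OF Bp]) (use v' v t in auto)
        ultimately show False using nX unfolding e_def by (simp add: field_simps)
      qed
      then show ?thesis using tX by simp
    qed
  qed
  show ?thesis using ge le t_def by simp
qed

lemma p_ex: "t \<in> {0..T} \<Longrightarrow> \<exists>p\<in>{0..1}. r p = t \<and> (\<forall>s\<in>{0..1}. r s = t \<longrightarrow> p \<le> s)"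
proof -
  assume t: "t \<in> {0..T}"
  define P where "P = {s \<in> {0..1}. r s = t}"
  have cl: "closed P" unfolding P_def by (rule continuous_closed_preimage_constant[OF rc]) simp
  have ne: "P \<noteq> {}" using pt[OF t] unfolding P_def by auto
  have bb: "bdd_below P" unfolding P_def by (rule bdd_belowI[where m=0]) auto
  have "Inf P \<in> P" by (rule closed_contains_Inf[OF ne bb cl])
  moreover have "\<forall>s\<in>{0..1}. r s = t \<longrightarrow> Inf P \<le> s"
    using cInf_lower[OF _ bb] unfolding P_def by auto
  ultimately show ?thesis unfolding P_def by auto
qed

lemma rsand: "x \<in> {0..1} \<Longrightarrow> y \<in> {0..1} \<Longrightarrow> x \<le> u \<Longrightarrow> u \<le> y \<Longrightarrow> r x = r y \<Longrightarrow> u \<in> {0..1} \<and> r u = r x"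
proof -
  assume h: "x \<in> {0..1}" "y \<in> {0..1}" "x \<le> u" "u \<le> y" "r x = r y"
  have u: "u \<in> {0..1}" using h by auto
  have "r x \<le> r u" by (rule rmono) (use h u in auto)
  moreover have "r u \<le> r y" by (rule rmono) (use h u in auto)
  ultimately show ?thesis using u h(5) by auto
qed

lemma Lm2:
  assumes x: "x \<in> {0..1}" and y: "y \<in> {0..1}" and xy: "x \<le> y" and rxy: "r x = r y"
  shows "(leftlim \<phi> (r x) \<le> \<phi> (r x) \<longrightarrow> Lambda a g x \<le> Lambda a g y) \<and>
         (\<not> leftlim \<phi> (r x) \<le> \<phi> (r x) \<longrightarrow> Lambda a g y \<le> Lambda a g x)"
proof -
  obtain B where Bg: "\<And>x. x \<in> {0..1} \<Longrightarrow> \<bar>g x\<bar> \<le> B"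
    using bnd_ex by blast
  have U: "u \<in> {0..1} \<and> r u = r x" if "u \<in> {x..y}" for u
  proof -
    have "x \<le> u" "u \<le> y" using that by auto
    thus ?thesis by (rule rsand[OF x y _ _ rxy])
  qed
  show ?thesis
  proof (intro conjI impI)
    assume h: "leftlim \<phi> (r x) \<le> \<phi> (r x)"
    have "Kf a g y \<le> Kf a g x + (g y - g x)"
    proof (rule K_up[OF Bg])
      fix u assume u: "u \<in> {x..y}"
      have u1: "u \<in> {0..1}" "r u = r y" using U[OF u] rxy by auto
      have gd: "(leftlim \<phi> (r u) \<le> \<phi> (r u) \<longrightarrow> g u \<le> g y) \<and> (\<not> leftlim \<phi> (r u) \<le> \<phi> (r u) \<longrightarrow> g y \<le> g u)"
        by (rule gdir[OF u1(1) y _ u1(2)]) (use u in auto)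
      have "r u = r x" using U[OF u] by simp
      hence "g u \<le> g y" using gd h by simp
      thus "g u \<le> g x + (g y - g x)" by simp
    qed (use x y xy in auto)
    thus "Lambda a g x \<le> Lambda a g y" by (simp add: Lambda_Kf)
  next
    assume h: "\<not> leftlim \<phi> (r x) \<le> \<phi> (r x)"
    have "Kf a g x - (g x - g y) \<le> Kf a g y"
    proof (rule K_down[OF Bg])
      fix u assume u: "u \<in> {x..y}"
      have u1: "u \<in> {0..1}" "r u = r y" using U[OF u] rxy by auto
      have gd: "(leftlim \<phi> (r u) \<le> \<phi> (r u) \<longrightarrow> g u \<le> g y) \<and> (\<not> leftlim \<phi> (r u) \<le> \<phi> (r u) \<longrightarrow> g y \<le> g u)"
        by (rule gdir[OF u1(1) y _ u1(2)]) (use u in auto)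
      have "r u = r x" using U[OF u] by simp
      hence "g y \<le> g u" using gd h by simp
      thus "g x - (g x - g y) \<le> g u" by simp
    qed (use x y xy in auto)
    thus "Lambda a g y \<le> Lambda a g x" by (simp add: Lambda_Kf)
  qed
qed

lemma Lmono:
  assumes p: "p \<in> {0..1}" and s2: "s2 \<in> {0..1}" and o: "p \<le> s1" "s1 \<le> s2" and rr: "r p = r s2"
  shows "(Lambda a g p \<le> Lambda a g s1 \<and> Lambda a g s1 \<le> Lambda a g s2) \<or>
         (Lambda a g s2 \<le> Lambda a g s1 \<and> Lambda a g s1 \<le> Lambda a g p)"
proof -
  have s1: "s1 \<in> {0..1}" "r s1 = r p" using rsand[OF p s2 o rr] by auto
  have rs: "r s1 = r s2" using s1 rr by simp
  have A: "(leftlim \<phi> (r p) \<le> \<phi> (r p) \<longrightarrow> Lambda a g p \<le> Lambda a g s1) \<and>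
         (\<not> leftlim \<phi> (r p) \<le> \<phi> (r p) \<longrightarrow> Lambda a g s1 \<le> Lambda a g p)"
    by (rule Lm2[OF p s1(1) o(1) s1(2)[symmetric]])
  have B: "(leftlim \<phi> (r p) \<le> \<phi> (r p) \<longrightarrow> Lambda a g s1 \<le> Lambda a g s2) \<and>
         (\<not> leftlim \<phi> (r p) \<le> \<phi> (r p) \<longrightarrow> Lambda a g s2 \<le> Lambda a g s1)"
    using Lm2[OF s1(1) s2 o(2) rs] s1(2) by simp
  show ?thesis using A B by blast
qed

lemma r0: "r 0 = 0" and g0: "g 0 = \<phi> 0"
proof -
  obtain s where s: "s \<in> {0..1}" "r s = 0" "g s = \<phi> 0" using pt[of 0] T by auto
  have "r 0 \<le> r s" using rmono[of 0 s] s by auto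
  thus r0: "r 0 = 0" using r_range[of 0] s by auto
  show "g 0 = \<phi> 0" using seg[of 0] r0 by (simp add: leftlim_def)
qed

lemma LL:
  assumes t: "t \<in> {0..T}" and p: "p \<in> {0..1}" "r p = t" and pmin: "\<forall>s\<in>{0..1}. r s = t \<longrightarrow> p \<le> s"
  shows "leftlim (Lambda a \<phi>) t = Lambda a g p"
proof (cases "t = 0")
  case True
  hence "p = 0" using pmin[rule_format, of 0] r0 p by auto
  thus ?thesis using True M1[of 0] g0 r0 by (simp add: leftlim_def Lambda_Kf)
next
  case False
  hence t0: "t > 0" using t by auto
  have lc: "continuous_on {0..1} (Lambda a g)" by (rule Lambda_cont[OF gc])
  have p0: "p > 0" using p r0 t0 by (cases "p = 0") auto
  have tend: "(Lambda a \<phi> \<longlongrightarrow> Lambda a g p) (at_left t)"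
    unfolding tendsto_iff
  proof (intro allI impI)
    fix e :: real assume e: "e > 0"
    obtain d where d: "d > 0" "\<And>x'. x' \<in> {0..1} \<Longrightarrow> dist x' p < d \<Longrightarrow> dist (Lambda a g x') (Lambda a g p) < e"
      using lc p(1) e unfolding continuous_on_iff by metis
    define s0 where "s0 = max 0 (p - d/2)"
    have s0: "s0 \<in> {0..1}" "s0 < p" "p - s0 < d" using p p0 d by (auto simp: s0_def)
    have "r s0 \<le> t" using rmono[OF s0(1) p(1)] s0 p by auto
    moreover have "r s0 \<noteq> t" using pmin s0 by force
    ultimately have rs0: "r s0 < t" by simp
    show "\<forall>\<^sub>F x in at_left t. dist (Lambda a \<phi> x) (Lambda a g p) < e"
      using eventually_at_left_real[OF rs0]
    proof eventually_elim
      case (elim x)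
      have "r s0 \<ge> 0" using r_range[OF s0(1)] by auto
      hence x: "x \<in> {0..T}" using elim t by auto
      obtain s' where s': "s' \<in> {0..1}" "r s' = x" "g s' = \<phi> x" using pt[OF x] by auto
      have "s' < p" using rlt[OF s'(1) p(1)] s' p elim by auto
      moreover have "s0 < s'" using rlt[OF s0(1) s'(1)] s' elim by auto
      ultimately have "dist s' p < d" using s0 by (auto simp: dist_real_def)
      hence "dist (Lambda a g s') (Lambda a g p) < e" using d s' by auto
      moreover have "Lambda a g s' = Lambda a \<phi> x" using M1[OF s'(1)] s' by (simp add: Lambda_Kf)
      ultimately show ?case by simp
    qed
  qed
  have "Lim (at_left t) (Lambda a \<phi>) = Lambda a g p" by (rule tendsto_Lim[OF _ tend]) simp
  thus ?thesis using t0 by (simp add: leftlim_def)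
qed

theorem main: "(r, Lambda a g) \<in> param_reps T (Lambda a \<phi>)"
proof -
  have lc: "continuous_on {0..1} (Lambda a g)" by (rule Lambda_cont[OF gc])
  have fin: "Lambda a g m = Lambda a \<phi> t" if "m \<in> {0..1}" "r m = t" "g m = \<phi> t" for m t
    using M1[OF that(1)] that by (simp add: Lambda_Kf)
  have sub: "(\<lambda>s. (r s, Lambda a g s)) ` {0..1} \<subseteq> cgraph T (Lambda a \<phi>)"
  proof
    fix y assume "y \<in> (\<lambda>s. (r s, Lambda a g s)) ` {0..1}"
    then obtain s where s: "s \<in> {0..1}" and y: "y = (r s, Lambda a g s)" by auto
    define t where "t = r s"
    have t: "t \<in> {0..T}" using r_range[OF s] t_def by simp
    obtain p where p: "p \<in> {0..1}" "r p = t" and pmin: "\<forall>s\<in>{0..1}. r s = t \<longrightarrow> p \<le> s"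
      using p_ex[OF t] by blast
    obtain q where q: "q \<in> {0..1}" "r q = t" "g q = \<phi> t" using pt[OF t] by auto
    define m where "m = max s q"
    have m: "m \<in> {0..1}" "r m = t" using s q t_def by (auto simp: m_def max_def)
    have "g m = \<phi> t" using fwd[OF q(1) m(1)] q m by (auto simp: m_def)
    hence fm: "Lambda a g m = Lambda a \<phi> t" using fin m by simp
    have "p \<le> s" using pmin s t_def by auto
    hence "(Lambda a g p \<le> Lambda a g s \<and> Lambda a g s \<le> Lambda a g m) \<or>
         (Lambda a g m \<le> Lambda a g s \<and> Lambda a g s \<le> Lambda a g p)"
      by (rule Lmono[OF p(1) m(1)]) (use p m in \<open>auto simp: m_def\<close>)
    thus "y \<in> cgraph T (Lambda a \<phi>)" unfolding y cgraph_def
      using LL[OF t p pmin] fm t t_def by auto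
  qed
  have sup: "cgraph T (Lambda a \<phi>) \<subseteq> (\<lambda>s. (r s, Lambda a g s)) ` {0..1}"
  proof
    fix y assume "y \<in> cgraph T (Lambda a \<phi>)"
    then obtain t z where y: "y = (t, z)" and t: "t \<in> {0..T}"
      and z: "min (leftlim (Lambda a \<phi>) t) (Lambda a \<phi> t) \<le> z" "z \<le> max (leftlim (Lambda a \<phi>) t) (Lambda a \<phi> t)"
      unfolding cgraph_def by auto
    obtain p where p: "p \<in> {0..1}" "r p = t" and pmin: "\<forall>s\<in>{0..1}. r s = t \<longrightarrow> p \<le> s"
      using p_ex[OF t] by blast
    obtain q where q: "q \<in> {0..1}" "r q = t" "g q = \<phi> t" using pt[OF t] by auto
    define m where "m = max p q"
    have m: "m \<in> {0..1}" "r m = t" "p \<le> m" using p q by (auto simp: m_def max_def)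
    have "g m = \<phi> t" using fwd[OF q(1) m(1)] q m by (auto simp: m_def)
    hence fm: "Lambda a g m = Lambda a \<phi> t" using fin m by simp
    have ll: "leftlim (Lambda a \<phi>) t = Lambda a g p" by (rule LL[OF t p pmin])
    have cpm: "continuous_on {p..m} (Lambda a g)"
      by (rule continuous_on_subset[OF lc]) (use p m in auto)
    obtain x where x: "p \<le> x" "x \<le> m" "Lambda a g x = z"
    proof (cases "Lambda a g p \<le> Lambda a g m")
      case True
      show ?thesis using IVT'[of "Lambda a g" p z m, OF _ _ m(3) cpm] z True ll fm that by auto
    next
      case False
      show ?thesis using IVT2'[of "Lambda a g" m z p, OF _ _ m(3) cpm] z False ll fm that by auto
    qed
    have "x \<in> {0..1} \<and> r x = r p" using rsand[OF p(1) m(1) x(1,2)] p m by auto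
    hence xx: "x \<in> {0..1}" "y = (r x, Lambda a g x)" using y x p by auto
    show "y \<in> (\<lambda>s. (r s, Lambda a g s)) ` {0..1}" using xx by blast
  qed
  have ord: "\<forall>s1\<in>{0..1}. \<forall>s2\<in>{0..1}. s1 \<le> s2 \<longrightarrow>
      graph_le (Lambda a \<phi>) (r s1, Lambda a g s1) (r s2, Lambda a g s2)"
  proof (intro ballI impI)
    fix s1 s2 :: real assume s1: "s1 \<in> {0..1}" and s2: "s2 \<in> {0..1}" and le: "s1 \<le> s2"
    show "graph_le (Lambda a \<phi>) (r s1, Lambda a g s1) (r s2, Lambda a g s2)"
    proof (cases "r s1 < r s2")
      case True thus ?thesis by (simp add: graph_le_def)
    next
      case False
      define t where "t = r s1"
      have rr: "r s2 = t" using rmono[OF s1 s2 le] False t_def by auto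
      have t: "t \<in> {0..T}" using r_range[OF s1] t_def by simp
      obtain p where p: "p \<in> {0..1}" "r p = t" and pmin: "\<forall>s\<in>{0..1}. r s = t \<longrightarrow> p \<le> s"
        using p_ex[OF t] by blast
      have "p \<le> s1" using pmin s1 t_def by auto
      hence "(Lambda a g p \<le> Lambda a g s1 \<and> Lambda a g s1 \<le> Lambda a g s2) \<or>
         (Lambda a g s2 \<le> Lambda a g s1 \<and> Lambda a g s1 \<le> Lambda a g p)"
        by (rule Lmono[OF p(1) s2 _ le]) (use p rr in auto)
      thus ?thesis using LL[OF t p pmin] rr t_def by (auto simp: graph_le_def)
    qed
  qed
  show ?thesis unfolding param_reps_def using rc lc sub sup ord by auto
qed

end

theorem lemmaA1:
  fixes a T :: real and \<phi> r g :: "real \<Rightarrow> real"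
  assumes "a > 0" and "T > 0" and "cadlag T \<phi>"
    and "(r, g) \<in> param_reps T \<phi>"
  shows "(r, Lambda a g) \<in> param_reps T (Lambda a \<phi>)"
proof -
  interpret setting a T \<phi> r g
    using assms unfolding param_reps_def by unfold_locales auto
  show ?thesis by (rule main)
qed

end
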